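(* Fix $m<n$. The triples of statistics $(\mathrm{Rec},\mathrm{psa},\mathrm{wait})$ on the set of ordered $(m,n)$-forests and $(\mathrm{Rec},\mathrm{lucky},\mathrm{probes})$ on the set of $(m,n)$-parking functions are jointly equidistributed: for every set $R$ and integers $a,b$, the number of ordered $(m,n)$-forests $F$ with $(\mathrm{Rec}(F),\mathrm{psa}(F),\mathrm{wait}(F))=(R,a,b)$ equals the number of $(m,n)$-parking functions $\pi$ with $(\mathrm{Rec}(\pi),\mathrm{lucky}(\pi),\mathrm{probes}(\pi))=(R,a,b)$.
   Context: $[n]=\{1,\dots,n\}$, $[n]_0=\{0,\dots,n\}$. Ordered forests: an ordered $(m,n)$-forest is a rooted forest with $n+1$ nodes and $m$ edges whose component trees $T_0,\dots,T_{n-m}$ are totally ordered, with roots unlabeled and marked $\circ,\circ_1,\dots,\circ_{n-m}$, and with its $m$ non-root vertices labeled bijectively by $[m]$. Priority search on $F$: initially only the children of $\circ$ are unblocked; at each step one visits the unblocked unvisited node with the smallest label and unblocks its children; when all nodes of a tree have been visited, one moves to the next tree, visits its root and unblocks the root's children. Steps are numbered $1,\dots,n$, with $\circ$ considered visited at step $0$. The priority traversal of $F$ is the word whose $i$-th letter is the label of the node visited at step $i$, or $-$ if that node is a root. A forest record of $F$ is a non-root node whose label is the largest label among the non-root nodes on the path from its root to it; $\mathrm{Rec}(F)$ is the set of forest records. A non-root vertex is a priority small ascent if it is visited at the step immediately after its parent; $\mathrm{psa}(F)$ is their number. The waiting time of a non-root vertex visited at step $b$ whose parent was visited at step $a$ is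 $b-a$ (the number of steps during which it is unblocked, counting the step at which it is visited); $\mathrm{wait}(F)$ is the sum of waiting times over all non-root vertices. Partial parking functions: an $(m,n)$-parking function is a map $\pi:[m]\to[n]$ such that when cars $1,\dots,m$ arrive in order to spots $1,\dots,n$ and car $i$ parks in the first empty spot $\ge\pi(i)$, all cars park. Its bird's eye permutation is the word $\omega(1)\cdots\omega(n)$ where $\omega(s)$ is the car parked at spot $s$, or $-$ if spot $s$ is empty. A record of a word in $[m]\cup\{-\}$ is a left-to-right maximum of one of its maximal subwords not containing $-$; $\mathrm{Rec}(\pi)$ is the set of records of the bird's eye permutation of $\pi$. A car is lucky if it parks at its preferred spot; $\mathrm{lucky}(\pi)$ is the number of lucky cars. $\mathrm{probes}(\pi)$ is the total number of parking attempts (successful or not) of all cars, where car $i$ parking at spot $s$ makes $s-\pi(i)+1$ attempts. *)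

theory Defs
  imports "HOL-Library.FuncSet"
begin

text \<open>Nodes: Inl i is the non-root vertex labelled i (1 <= i <= m);
  Inr j is the root of tree T_j (0 <= j <= n-m), Inr 0 being the root o.
  An ordered (m,n)-forest is encoded by its parent map on the non-root vertices.\<close>

type_synonym node = "nat + nat"

definition up :: "(nat \<Rightarrow> node) \<Rightarrow> node \<Rightarrow> node" where
  "up p v = (case v of Inl i \<Rightarrow> p i | Inr r \<Rightarrow> Inr r)"

definition ordered_forests :: "nat \<Rightarrow> nat \<Rightarrow> (nat \<Rightarrow> node) set" where
  "ordered_forests m n =
     {p. p \<in> {1..m} \<rightarrow>\<^sub>E (Inl ` {1..m} \<union> Inr ` {0..n-m})
         \<and> (\<forall>i\<in>{1..m}. \<exists>k. \<not> isl ((up p ^^ k) (Inl i)))}"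

definition ps_next :: "nat \<Rightarrow> (nat \<Rightarrow> node) \<Rightarrow> node list \<Rightarrow> node" where
  "ps_next m p vs =
     (let U = {i\<in>{1..m}. p i \<in> set vs \<and> Inl i \<notin> set vs}
      in if U \<noteq> {} then Inl (Min U) else Inr (length (filter (\<lambda>x. \<not> isl x) vs)))"

text \<open>List of nodes in the order visited: entry k is the node visited at step k (0 <= k <= n).\<close>
definition ps_order :: "nat \<Rightarrow> nat \<Rightarrow> (nat \<Rightarrow> node) \<Rightarrow> node list" where
  "ps_order m n p = ((\<lambda>vs. vs @ [ps_next m p vs]) ^^ n) [Inr 0]"

definition visit_step :: "nat \<Rightarrow> nat \<Rightarrow> (nat \<Rightarrow> node) \<Rightarrow> node \<Rightarrow> nat" where
  "visit_step m n p v = (LEAST k. ps_order m n p ! k = v)"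

definition forest_Rec :: "nat \<Rightarrow> (nat \<Rightarrow> node) \<Rightarrow> nat set" where
  "forest_Rec m p = {i\<in>{1..m}. \<forall>k j. (up p ^^ k) (Inl i) = Inl j \<longrightarrow> j \<le> i}"

definition psa :: "nat \<Rightarrow> nat \<Rightarrow> (nat \<Rightarrow> node) \<Rightarrow> nat" where
  "psa m n p = card {i\<in>{1..m}. visit_step m n p (Inl i) = visit_step m n p (p i) + 1}"

definition wait :: "nat \<Rightarrow> nat \<Rightarrow> (nat \<Rightarrow> node) \<Rightarrow> nat" where
  "wait m n p = (\<Sum>i\<in>{1..m}. visit_step m n p (Inl i) - visit_step m n p (p i))"

text \<open>Occupancy after cars 1..i have arrived: spot s holds Some car or None.\<close>
fun occ :: "(nat \<Rightarrow> nat) \<Rightarrow> nat \<Rightarrow> nat \<Rightarrow> nat \<Rightarrow> nat option" where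
  "occ \<pi> n 0 = (\<lambda>s. None)"
| "occ \<pi> n (Suc i) =
     (let w = occ \<pi> n i; S = {s. \<pi> (Suc i) \<le> s \<and> s \<le> n \<and> w s = None}
      in if S = {} then w else w(Min S := Some (Suc i)))"

definition parking_functions :: "nat \<Rightarrow> nat \<Rightarrow> (nat \<Rightarrow> nat) set" where
  "parking_functions m n =
     {\<pi>. \<pi> \<in> {1..m} \<rightarrow>\<^sub>E {1..n}
        \<and> (\<forall>i\<in>{1..m}. \<exists>s. \<pi> i \<le> s \<and> s \<le> n \<and> occ \<pi> n (i - 1) s = None)}"

definition spot :: "(nat \<Rightarrow> nat) \<Rightarrow> nat \<Rightarrow> nat \<Rightarrow> nat" where
  "spot \<pi> n i = Min {s. \<pi> i \<le> s \<and> s \<le> n \<and> occ \<pi> n (i - 1) s = None}"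

text \<open>Bird's eye permutation: letter at position s-1 is the car at spot s (None = '-').\<close>
definition birds_eye :: "nat \<Rightarrow> nat \<Rightarrow> (nat \<Rightarrow> nat) \<Rightarrow> nat option list" where
  "birds_eye m n \<pi> = map (occ \<pi> n m) [1..<Suc n]"

text \<open>Records of a word over [m] and '-': left-to-right maxima of maximal '-'-free subwords.\<close>
definition word_Rec :: "nat option list \<Rightarrow> nat set" where
  "word_Rec w = {c. \<exists>k<length w. w ! k = Some c \<and>
      (\<forall>j<k. (\<forall>t\<in>{j..k}. w ! t \<noteq> None) \<longrightarrow> the (w ! j) < c)}"

definition pf_Rec :: "nat \<Rightarrow> nat \<Rightarrow> (nat \<Rightarrow> nat) \<Rightarrow> nat set" where
  "pf_Rec m n \<pi> = word_Rec (birds_eye m n \<pi>)"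

definition lucky :: "nat \<Rightarrow> nat \<Rightarrow> (nat \<Rightarrow> nat) \<Rightarrow> nat" where
  "lucky m n \<pi> = card {i\<in>{1..m}. spot \<pi> n i = \<pi> i}"

definition probes :: "nat \<Rightarrow> nat \<Rightarrow> (nat \<Rightarrow> nat) \<Rightarrow> nat" where
  "probes m n \<pi> = (\<Sum>i\<in>{1..m}. spot \<pi> n i - \<pi> i + 1)"

end

theory Submission
  imports Defs
begin



definition nodes :: "nat \<Rightarrow> nat \<Rightarrow> node set" where
  "nodes m n = Inl ` {1..m} \<union> Inr ` {0..n-m}"

definition Lk :: "nat \<Rightarrow> (nat \<Rightarrow> node) \<Rightarrow> nat \<Rightarrow> node list" where
  "Lk m p k = ((\<lambda>vs. vs @ [ps_next m p vs]) ^^ k) [Inr 0]"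

lemma Lk_0: "Lk m p 0 = [Inr 0]"
  by (simp add: Lk_def)

lemma Lk_Suc: "Lk m p (Suc k) = Lk m p k @ [ps_next m p (Lk m p k)]"
  by (simp add: Lk_def)

lemma length_Lk: "length (Lk m p k) = Suc k"
  by (induction k) (auto simp: Lk_0 Lk_Suc)

lemma take_Lk: "k \<le> K \<Longrightarrow> take (Suc k) (Lk m p K) = Lk m p k"
proof (induction K)
  case 0 then show ?case by (simp add: Lk_0)
next
  case (Suc K)
  show ?case
  proof (cases "k = Suc K")
    case True then show ?thesis using length_Lk[of m p "Suc K"] by simp
  next
    case False
    then have "k \<le> K" using Suc.prems by simp
    then show ?thesis using Suc.IH length_Lk[of m p K] by (simp add: Lk_Suc)
  qed
qed

lemma ps_order_Lk: "ps_order m n p = Lk m p n"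
  by (simp add: ps_order_def Lk_def)

lemma nth_Lk: "k \<le> K \<Longrightarrow> Lk m p K ! k = Lk m p k ! k"
proof -
  assume "k \<le> K"
  then have "take (Suc k) (Lk m p K) ! k = Lk m p k ! k" using take_Lk by metis
  then show ?thesis by simp
qed

lemma Lk_nth_Suc: "Lk m p (Suc k) ! Suc k = ps_next m p (Lk m p k)"
  using length_Lk[of m p k] by (simp add: Lk_Suc nth_append)

lemma up_Inl[simp]: "up p (Inl i) = p i" by (simp add: up_def)
lemma up_Inr[simp]: "up p (Inr r) = Inr r" by (simp add: up_def)

lemma funpow_up_Inr[simp]: "(up p ^^ d) (Inr r) = Inr r"
  by (induction d) auto

lemma forest_nodes: "p \<in> ordered_forests m n \<Longrightarrow> i \<in> {1..m} \<Longrightarrow> p i \<in> nodes m n"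
  unfolding ordered_forests_def nodes_def by auto

lemma forest_ext: "p \<in> ordered_forests m n \<Longrightarrow> p \<in> extensional {1..m}"
  unfolding ordered_forests_def by (auto simp: PiE_def)

lemma forest_acyc: "p \<in> ordered_forests m n \<Longrightarrow> i \<in> {1..m} \<Longrightarrow> \<exists>k. \<not> isl ((up p ^^ k) (Inl i))"
  unfolding ordered_forests_def by auto

lemma chain_nodes:
  assumes "p \<in> ordered_forests m n"
  shows "i \<in> {1..m} \<Longrightarrow> (up p ^^ d) (Inl i) \<in> nodes m n"
proof (induction d arbitrary: i)
  case 0 then show ?case by (simp add: nodes_def)
next
  case (Suc d)
  have e: "(up p ^^ Suc d) (Inl i) = (up p ^^ d) (p i)" by (metis comp_apply funpow_Suc_right up_Inl)
  have pn: "p i \<in> nodes m n" using forest_nodes[OF assms Suc.prems] .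
  show ?case
  proof (cases "p i")
    case (Inl q)
    then have "q \<in> {1..m}" using pn by (auto simp: nodes_def)
    then show ?thesis using Suc.IH e Inl by simp
  next
    case (Inr r)
    then show ?thesis using e pn by simp
  qed
qed

lemma card_nodes: "m < n \<Longrightarrow> card (nodes m n) = Suc n"
proof -
  assume "m < n"
  have "card (nodes m n) = card (Inl ` {1..m} :: node set) + card (Inr ` {0..n-m} :: node set)"
    unfolding nodes_def by (rule card_Un_disjoint) auto
  also have "\<dots> = m + Suc (n - m)" by (simp add: card_image)
  finally show ?thesis using \<open>m < n\<close> by simp
qed

lemma finite_nodes[simp]: "finite (nodes m n)" by (simp add: nodes_def)

lemma U_empty_closed:
  assumes "p \<in> ordered_forests m n"
    and U: "{i\<in>{1..m}. p i \<in> set vs \<and> Inl i \<notin> set vs} = {}"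
  shows "i \<in> {1..m} \<Longrightarrow> Inl i \<notin> set vs \<Longrightarrow> (up p ^^ d) (Inl i) \<notin> set vs"
proof (induction d arbitrary: i)
  case 0 then show ?case by simp
next
  case (Suc d)
  have e: "(up p ^^ Suc d) (Inl i) = (up p ^^ d) (p i)" by (metis comp_apply funpow_Suc_right up_Inl)
  have pn: "p i \<in> nodes m n" using forest_nodes[OF assms(1) Suc.prems(1)] .
  have ni: "p i \<notin> set vs" using U Suc.prems by blast
  show ?case
  proof (cases "p i")
    case (Inl q)
    then have "q \<in> {1..m}" using pn by (auto simp: nodes_def)
    then show ?thesis using Suc.IH e Inl ni by simp
  next
    case (Inr r)
    then show ?thesis using e ni by simp
  qed
qed

definition inv_vs :: "nat \<Rightarrow> nat \<Rightarrow> node list \<Rightarrow> bool" where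
  "inv_vs m n vs \<longleftrightarrow> distinct vs \<and> set vs \<subseteq> nodes m n
     \<and> {r. Inr r \<in> set vs} = {0..<length (filter (\<lambda>x. \<not> isl x) vs)}"

lemma next_props:
  assumes F: "p \<in> ordered_forests m n" and mn: "m < n"
    and I: "inv_vs m n vs" and len: "length vs \<le> n"
  shows "inv_vs m n (vs @ [ps_next m p vs])"
proof -
  define U where "U = {i\<in>{1..m}. p i \<in> set vs \<and> Inl i \<notin> set vs}"
  define r where "r = length (filter (\<lambda>x. \<not> isl x) vs)"
  have dist: "distinct vs" and sub: "set vs \<subseteq> nodes m n"
    and roots: "{r. Inr r \<in> set vs} = {0..<r}" using I by (auto simp: inv_vs_def r_def)
  show ?thesis
  proof (cases "U = {}")
    case False
    have fin: "finite U" by (simp add: U_def)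
    have "Min U \<in> U" using Min_in[OF fin False] .
    then have mu: "Min U \<in> {1..m}" "Inl (Min U) \<notin> set vs" by (auto simp: U_def)
    have nx: "ps_next m p vs = Inl (Min U)" using False by (simp add: ps_next_def U_def Let_def)
    show ?thesis using dist sub roots mu unfolding inv_vs_def nx r_def
      by (auto simp: nodes_def)
  next
    case True
    have nx: "ps_next m p vs = Inr r" using True by (simp add: ps_next_def U_def r_def Let_def)
    have notin: "Inr r \<notin> set vs" using roots by auto
    have rle: "r \<le> n - m"
    proof (rule ccontr)
      assume "\<not> r \<le> n - m"
      then have allr: "\<And>r'. r' \<le> n - m \<Longrightarrow> Inr r' \<in> set vs" using roots by auto
      have "card (set vs) \<le> n" using len distinct_card[OF dist] by simp
      then have "card (set vs) < card (nodes m n)" using card_nodes[OF mn] by simp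
      then have "\<not> nodes m n \<subseteq> set vs" using card_mono[OF finite_set] by fastforce
      then obtain y where y: "y \<in> nodes m n" "y \<notin> set vs" by blast
      then obtain i where i: "y = Inl i" "i \<in> {1..m}" using allr by (auto simp: nodes_def)
      obtain d where d: "\<not> isl ((up p ^^ d) (Inl i))" using forest_acyc[OF F i(2)] by blast
      have cn: "(up p ^^ d) (Inl i) \<in> nodes m n" using chain_nodes[OF F i(2)] .
      then obtain r' where r': "(up p ^^ d) (Inl i) = Inr r'" "r' \<le> n - m"
        using d by (auto simp: nodes_def)
      have "(up p ^^ d) (Inl i) \<notin> set vs"
        using U_empty_closed[OF F True[unfolded U_def] i(2)] y i by simp
      then show False using allr r' by simp
    qed
    have fl: "length (filter (\<lambda>x. \<not> isl x) (vs @ [Inr r])) = Suc r" by (simp add: r_def)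
    have "{r'. Inr r' \<in> set (vs @ [Inr r])} = insert r {r'. Inr r' \<in> set vs}" by auto
    also have "\<dots> = {0..<Suc r}" using roots by auto
    finally have "{r'. Inr r' \<in> set (vs @ [Inr r])} = {0..<Suc r}" .
    then show ?thesis using dist sub notin rle fl unfolding inv_vs_def nx
      by (auto simp: nodes_def)
  qed
qed

lemma inv_Lk:
  assumes F: "p \<in> ordered_forests m n" and mn: "m < n"
  shows "k \<le> n \<Longrightarrow> inv_vs m n (Lk m p k)"
proof (induction k)
  case 0 then show ?case by (simp add: Lk_0 inv_vs_def nodes_def)
next
  case (Suc k)
  then show ?case using next_props[OF F mn Suc.IH] length_Lk[of m p k] by (simp add: Lk_Suc)
qed




lemma order_props:
  assumes F: "p \<in> ordered_forests m n" and mn: "m < n"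
  shows "length (ps_order m n p) = Suc n" "distinct (ps_order m n p)"
    "set (ps_order m n p) = nodes m n" "ps_order m n p ! 0 = Inr 0"
proof -
  have I: "inv_vs m n (Lk m p n)" using inv_Lk[OF F mn] by simp
  show l: "length (ps_order m n p) = Suc n" by (simp add: ps_order_Lk length_Lk)
  show d: "distinct (ps_order m n p)" using I by (simp add: ps_order_Lk inv_vs_def)
  have s: "set (ps_order m n p) \<subseteq> nodes m n" using I by (simp add: ps_order_Lk inv_vs_def)
  have "card (set (ps_order m n p)) = card (nodes m n)"
    using distinct_card[OF d] l card_nodes[OF mn] by simp
  then show "set (ps_order m n p) = nodes m n" using s by (simp add: card_subset_eq)
  show "ps_order m n p ! 0 = Inr 0" using nth_Lk[of 0 n m p] by (simp add: ps_order_Lk Lk_0)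
qed

lemma T_nth:
  assumes F: "p \<in> ordered_forests m n" and mn: "m < n" and k: "k \<le> n"
  shows "visit_step m n p (ps_order m n p ! k) = k"
proof -
  let ?o = "ps_order m n p"
  have ex: "\<exists>j. ?o ! j = ?o ! k" by blast
  have le: "(LEAST j. ?o ! j = ?o ! k) \<le> k" by (rule Least_le) simp
  have eq: "?o ! (LEAST j. ?o ! j = ?o ! k) = ?o ! k" by (rule LeastI_ex[OF ex])
  have "(LEAST j. ?o ! j = ?o ! k) = k"
    using nth_eq_iff_index_eq[OF order_props(2)[OF F mn]] order_props(1)[OF F mn] le k eq
    by (metis le_imp_less_Suc order.trans)
  then show ?thesis by (simp add: visit_step_def)
qed

lemma T_node:
  assumes F: "p \<in> ordered_forests m n" and mn: "m < n" and v: "v \<in> nodes m n"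
  shows "visit_step m n p v \<le> n" "ps_order m n p ! visit_step m n p v = v"
proof -
  have "v \<in> set (ps_order m n p)" using v order_props(3)[OF F mn] by simp
  then obtain k where k: "k < Suc n" "ps_order m n p ! k = v"
    using order_props(1)[OF F mn] by (metis in_set_conv_nth)
  then have "visit_step m n p v = k" using T_nth[OF F mn, of k] by simp
  then show "visit_step m n p v \<le> n" "ps_order m n p ! visit_step m n p v = v" using k by auto
qed

lemma order_step:
  assumes F: "p \<in> ordered_forests m n" and mn: "m < n" and s: "1 \<le> s" "s \<le> n"
  shows "ps_order m n p ! s = ps_next m p (take s (ps_order m n p))"
proof -
  obtain k where k: "s = Suc k" using s by (cases s) auto
  have "ps_order m n p ! s = Lk m p s ! s" using nth_Lk[of s n m p] s by (simp add: ps_order_Lk)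
  also have "\<dots> = ps_next m p (Lk m p k)" using k Lk_nth_Suc by simp
  also have "Lk m p k = take s (ps_order m n p)" using take_Lk[of k n m p] k s by (simp add: ps_order_Lk)
  finally show ?thesis .
qed

lemma in_take:
  assumes F: "p \<in> ordered_forests m n" and mn: "m < n" and s: "s \<le> Suc n"
  shows "v \<in> set (take s (ps_order m n p)) \<longleftrightarrow> v \<in> nodes m n \<and> visit_step m n p v < s"
proof
  assume "v \<in> set (take s (ps_order m n p))"
  then obtain j where j: "j < length (take s (ps_order m n p))" "take s (ps_order m n p) ! j = v"
    by (metis in_set_conv_nth)
  have jl: "j < s" "j \<le> n" using j(1) order_props(1)[OF F mn] by auto
  have ov: "ps_order m n p ! j = v" using j jl by simp
  have "v \<in> nodes m n" using ov jl order_props(1,3)[OF F mn] by (metis le_imp_less_Suc nth_mem)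
  moreover have "visit_step m n p v = j" using T_nth[OF F mn jl(2)] ov by simp
  ultimately show "v \<in> nodes m n \<and> visit_step m n p v < s" using jl by simp
next
  assume a: "v \<in> nodes m n \<and> visit_step m n p v < s"
  then have "take s (ps_order m n p) ! visit_step m n p v = v" using T_node[OF F mn] by simp
  moreover have "visit_step m n p v < length (take s (ps_order m n p))"
    using a order_props(1)[OF F mn] s by simp
  ultimately show "v \<in> set (take s (ps_order m n p))" by (metis nth_mem)
qed

lemma Inl_node: "Inl i \<in> nodes m n \<longleftrightarrow> i \<in> {1..m}" by (auto simp: nodes_def)

lemma T_pos:
  assumes F: "p \<in> ordered_forests m n" and mn: "m < n" and i: "i \<in> {1..m}"
  shows "1 \<le> visit_step m n p (Inl i)"
proof -
  have "ps_order m n p ! visit_step m n p (Inl i) = Inl i" using T_node[OF F mn] i Inl_node by blast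
  then show ?thesis using order_props(4)[OF F mn] by (cases "visit_step m n p (Inl i)") auto
qed

lemma F4:
  assumes F: "p \<in> ordered_forests m n" and mn: "m < n" and i: "i \<in> {1..m}"
  shows "visit_step m n p (p i) < visit_step m n p (Inl i)"
proof -
  let ?s = "visit_step m n p (Inl i)"
  let ?o = "ps_order m n p"
  define U where "U = {i\<in>{1..m}. p i \<in> set (take ?s ?o) \<and> Inl i \<notin> set (take ?s ?o)}"
  have s1: "1 \<le> ?s" using T_pos[OF F mn i] .
  have sn: "?s \<le> n" using T_node[OF F mn] i Inl_node by blast
  have "?o ! ?s = Inl i" using T_node[OF F mn] i Inl_node by blast
  then have nx: "ps_next m p (take ?s ?o) = Inl i" using order_step[OF F mn s1 sn] by simp
  then have "U \<noteq> {}" by (auto simp: ps_next_def U_def Let_def split: if_splits)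
  then have "Inl (Min U) = Inl i" using nx by (simp add: ps_next_def U_def Let_def)
  moreover have "Min U \<in> U" using \<open>U \<noteq> {}\<close> by (intro Min_in) (auto simp: U_def)
  ultimately have "i \<in> U" by simp
  then have "p i \<in> set (take ?s ?o)" by (simp add: U_def)
  then show ?thesis using in_take[OF F mn] sn by simp
qed

lemma F5:
  assumes F: "p \<in> ordered_forests m n" and mn: "m < n" and i: "i \<in> {1..m}"
    and u: "visit_step m n p (p i) < u" "u < visit_step m n p (Inl i)"
  shows "\<exists>j. ps_order m n p ! u = Inl j \<and> 1 \<le> j \<and> j < i"
proof -
  let ?o = "ps_order m n p"
  define U where "U = {i\<in>{1..m}. p i \<in> set (take u ?o) \<and> Inl i \<notin> set (take u ?o)}"
  have sn: "visit_step m n p (Inl i) \<le> n" using T_node[OF F mn] i Inl_node by blast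
  have u1: "1 \<le> u" "u \<le> n" using u sn by auto
  have pin: "p i \<in> nodes m n" using forest_nodes[OF F i] .
  have "i \<in> U" unfolding U_def using i u in_take[OF F mn, of u] u1 pin by auto
  then have Un: "U \<noteq> {}" by blast
  have fin: "finite U" by (simp add: U_def)
  have ou: "?o ! u = Inl (Min U)" using order_step[OF F mn u1] Un by (simp add: ps_next_def U_def Let_def)
  have "Min U \<le> i" using Min_le[OF fin \<open>i \<in> U\<close>] .
  moreover have "Min U \<noteq> i"
  proof
    assume "Min U = i"
    then have "visit_step m n p (Inl i) = u" using T_nth[OF F mn u1(2)] ou by simp
    then show False using u by simp
  qed
  moreover have "Min U \<in> U" using Min_in[OF fin Un] .
  then have "1 \<le> Min U" by (simp add: U_def)
  ultimately show ?thesis using ou by auto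
qed

lemma F3:
  assumes F: "p \<in> ordered_forests m n" and mn: "m < n" and s: "s \<le> n"
    and r: "ps_order m n p ! s = Inr r"
  shows "r = card {t. t < s \<and> \<not> isl (ps_order m n p ! t)}"
proof (cases "s = 0")
  case True then show ?thesis using r order_props(4)[OF F mn] by simp
next
  case False
  let ?o = "ps_order m n p"
  have s1: "1 \<le> s" using False by simp
  have "ps_next m p (take s ?o) = Inr r" using order_step[OF F mn s1 s] r by simp
  then have "r = length (filter (\<lambda>x. \<not> isl x) (take s ?o))"
    by (auto simp: ps_next_def Let_def split: if_splits)
  also have "\<dots> = card {t. t < length (take s ?o) \<and> \<not> isl (take s ?o ! t)}"
    by (rule length_filter_conv_card)
  also have "\<dots> = card {t. t < s \<and> \<not> isl (?o ! t)}"
    using s order_props(1)[OF F mn] by (intro arg_cong[where f=card]) auto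
  finally show ?thesis .
qed




definition gmap :: "nat \<Rightarrow> nat \<Rightarrow> (nat \<Rightarrow> node) \<Rightarrow> (nat \<Rightarrow> nat)" where
  "gmap m n p = (\<lambda>i\<in>{1..m}. visit_step m n p (p i) + 1)"

lemma T_inj:
  assumes F: "p \<in> ordered_forests m n" and mn: "m < n"
    and v: "v \<in> nodes m n" and w: "w \<in> nodes m n" and e: "visit_step m n p v = visit_step m n p w"
  shows "v = w"
  using T_node(2)[OF F mn v] T_node(2)[OF F mn w] e by metis

lemma S_min:
  assumes F: "p \<in> ordered_forests m n" and mn: "m < n" and i: "i \<in> {1..m}"
    and ch: "\<And>s c. occ (gmap m n p) n (i - 1) s = Some c \<longleftrightarrow>
                 (1 \<le> c \<and> c \<le> i - 1 \<and> visit_step m n p (Inl c) = s)"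
  shows "{s. gmap m n p i \<le> s \<and> s \<le> n \<and> occ (gmap m n p) n (i - 1) s = None} \<noteq> {}"
    "Min {s. gmap m n p i \<le> s \<and> s \<le> n \<and> occ (gmap m n p) n (i - 1) s = None} = visit_step m n p (Inl i)"
proof -
  let ?T = "visit_step m n p"
  define S where "S = {s. gmap m n p i \<le> s \<and> s \<le> n \<and> occ (gmap m n p) n (i - 1) s = None}"
  have gi: "gmap m n p i = ?T (p i) + 1" using i by (simp add: gmap_def)
  have sn: "?T (Inl i) \<le> n" using T_node[OF F mn] i Inl_node by blast
  have f4: "?T (p i) < ?T (Inl i)" using F4[OF F mn i] .
  have none: "occ (gmap m n p) n (i - 1) (?T (Inl i)) = None"
  proof (rule ccontr)
    assume "occ (gmap m n p) n (i - 1) (?T (Inl i)) \<noteq> None"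
    then obtain c where "occ (gmap m n p) n (i - 1) (?T (Inl i)) = Some c" by blast
    then have c: "1 \<le> c" "c \<le> i - 1" "?T (Inl c) = ?T (Inl i)" using ch by auto
    then have "Inl c = (Inl i :: node)" using T_inj[OF F mn] i Inl_node by (metis atLeastAtMost_iff
        diff_le_self le_trans)
    then show False using c i by simp
  qed
  have mem: "?T (Inl i) \<in> S" unfolding S_def using gi f4 sn none by simp
  have low: "\<And>s. s \<in> S \<Longrightarrow> ?T (Inl i) \<le> s"
  proof (rule ccontr)
    fix s assume s: "s \<in> S" "\<not> ?T (Inl i) \<le> s"
    have "?T (p i) < s" using s gi by (simp add: S_def)
    then obtain j where j: "ps_order m n p ! s = Inl j" "1 \<le> j" "j < i"
      using F5[OF F mn i] s by fastforce
    have "?T (Inl j) = s" using T_nth[OF F mn, of s] j s sn by simp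
    then have "occ (gmap m n p) n (i - 1) s = Some j" using ch j by simp
    then show False using s by (simp add: S_def)
  qed
  have fin: "finite S" by (simp add: S_def)
  show "S \<noteq> {}" using mem by blast
  show "Min S = ?T (Inl i)" using Min_eqI[OF fin low mem] .
qed

lemma occ_g:
  assumes F: "p \<in> ordered_forests m n" and mn: "m < n"
  shows "k \<le> m \<Longrightarrow> occ (gmap m n p) n k s = Some c \<longleftrightarrow> (1 \<le> c \<and> c \<le> k \<and> visit_step m n p (Inl c) = s)"
proof (induction k arbitrary: s c)
  case 0 then show ?case by simp
next
  case (Suc k)
  let ?T = "visit_step m n p"
  let ?S = "{s. gmap m n p (Suc k) \<le> s \<and> s \<le> n \<and> occ (gmap m n p) n k s = None}"
  have i: "Suc k \<in> {1..m}" using Suc.prems by simp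
  have ch: "\<And>s c. occ (gmap m n p) n (Suc k - 1) s = Some c \<longleftrightarrow>
                 (1 \<le> c \<and> c \<le> Suc k - 1 \<and> ?T (Inl c) = s)" using Suc.IH Suc.prems by simp
  have ne: "?S \<noteq> {}" and mn': "Min ?S = ?T (Inl (Suc k))" using S_min[OF F mn i ch] by simp_all
  have "occ (gmap m n p) n (Suc k) = (if ?S = {} then occ (gmap m n p) n k
      else (occ (gmap m n p) n k)(Min ?S := Some (Suc k)))" by (simp only: occ.simps Let_def)
  also have "\<dots> = (occ (gmap m n p) n k)(?T (Inl (Suc k)) := Some (Suc k))"
    by (simp only: ne mn' if_False)
  finally have eq: "occ (gmap m n p) n (Suc k) = (occ (gmap m n p) n k)(?T (Inl (Suc k)) := Some (Suc k))" .
  have inj: "\<And>c. 1 \<le> c \<Longrightarrow> c \<le> k \<Longrightarrow> ?T (Inl c) \<noteq> ?T (Inl (Suc k))"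
  proof
    fix c assume c: "1 \<le> c" "c \<le> k" "?T (Inl c) = ?T (Inl (Suc k))"
    then have "(Inl c :: node) = Inl (Suc k)" using T_inj[OF F mn] i Inl_node Suc.prems
      by (metis atLeastAtMost_iff le_SucI le_trans)
    then show False using c by simp
  qed
  show ?case
  proof (cases "s = ?T (Inl (Suc k))")
    case True
    then show ?thesis using eq inj by (auto simp: le_Suc_eq)
  next
    case False
    then show ?thesis using eq Suc.IH[of s c] Suc.prems by (auto simp: le_Suc_eq)
  qed
qed

lemma spot_g:
  assumes F: "p \<in> ordered_forests m n" and mn: "m < n" and i: "i \<in> {1..m}"
  shows "spot (gmap m n p) n i = visit_step m n p (Inl i)"
    "{s. gmap m n p i \<le> s \<and> s \<le> n \<and> occ (gmap m n p) n (i - 1) s = None} \<noteq> {}"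
proof -
  have ch: "\<And>s c. occ (gmap m n p) n (i - 1) s = Some c \<longleftrightarrow>
                 (1 \<le> c \<and> c \<le> i - 1 \<and> visit_step m n p (Inl c) = s)"
  proof -
    fix s c
    have "i - 1 \<le> m" using i by auto
    then show "occ (gmap m n p) n (i - 1) s = Some c \<longleftrightarrow>
                 (1 \<le> c \<and> c \<le> i - 1 \<and> visit_step m n p (Inl c) = s)"
      using occ_g[OF F mn] by blast
  qed
  show "spot (gmap m n p) n i = visit_step m n p (Inl i)"
    using S_min(2)[OF F mn i ch] by (simp add: spot_def)
  show "{s. gmap m n p i \<le> s \<and> s \<le> n \<and> occ (gmap m n p) n (i - 1) s = None} \<noteq> {}"
    using S_min(1)[OF F mn i ch] .
qed

lemma g_pf:
  assumes F: "p \<in> ordered_forests m n" and mn: "m < n"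
  shows "gmap m n p \<in> parking_functions m n"
proof -
  have "gmap m n p \<in> {1..m} \<rightarrow>\<^sub>E {1..n}"
  proof -
    have "\<And>i. i \<in> {1..m} \<Longrightarrow> visit_step m n p (p i) + 1 \<in> {1..n}"
    proof -
      fix i assume i: "i \<in> {1..m}"
      have "visit_step m n p (Inl i) \<le> n" using T_node[OF F mn] i Inl_node by blast
      then show "visit_step m n p (p i) + 1 \<in> {1..n}" using F4[OF F mn i] by simp
    qed
    then show ?thesis unfolding gmap_def by auto
  qed
  moreover have "\<forall>i\<in>{1..m}. \<exists>s. gmap m n p i \<le> s \<and> s \<le> n \<and> occ (gmap m n p) n (i - 1) s = None"
    using spot_g(2)[OF F mn] by blast
  ultimately show ?thesis by (simp add: parking_functions_def)
qed

lemma g_lucky: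
  assumes F: "p \<in> ordered_forests m n" and mn: "m < n"
  shows "lucky m n (gmap m n p) = psa m n p"
  unfolding lucky_def psa_def
proof (rule arg_cong[where f=card], rule Collect_cong)
  fix i
  show "(i \<in> {1..m} \<and> spot (gmap m n p) n i = gmap m n p i) =
    (i \<in> {1..m} \<and> visit_step m n p (Inl i) = visit_step m n p (p i) + 1)"
  proof (cases "i \<in> {1..m}")
    case True
    have "gmap m n p i = visit_step m n p (p i) + 1" using True by (simp add: gmap_def)
    then show ?thesis using spot_g(1)[OF F mn True] True by simp
  qed auto
qed

lemma g_probes:
  assumes F: "p \<in> ordered_forests m n" and mn: "m < n"
  shows "probes m n (gmap m n p) = wait m n p"
  unfolding probes_def wait_def
proof (rule sum.cong)
  fix i assume i: "i \<in> {1..m}"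
  show "spot (gmap m n p) n i - gmap m n p i + 1 = visit_step m n p (Inl i) - visit_step m n p (p i)"
    using spot_g(1)[OF F mn i] F4[OF F mn i] i by (simp add: gmap_def)
qed simp




definition nodeof :: "nat \<Rightarrow> nat \<Rightarrow> (nat \<Rightarrow> nat) \<Rightarrow> nat \<Rightarrow> node" where
  "nodeof m n \<pi> s = (case occ \<pi> n m s of Some c \<Rightarrow> Inl c
      | None \<Rightarrow> Inr (card {t\<in>{1..s}. occ \<pi> n m t = None}))"

definition hmap :: "nat \<Rightarrow> nat \<Rightarrow> (nat \<Rightarrow> nat) \<Rightarrow> (nat \<Rightarrow> node)" where
  "hmap m n \<pi> = (\<lambda>i\<in>{1..m}. nodeof m n \<pi> (\<pi> i - 1))"

lemma card_shift:
  fixes f :: "nat \<Rightarrow> bool"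
  assumes "f 0" "f s"
  shows "card {t. t < s \<and> f t} = card {t\<in>{1..s}. f t}"
proof (cases s)
  case 0 then show ?thesis by simp
next
  case (Suc s')
  have a: "{t. t < s \<and> f t} = insert 0 {t\<in>{1..s'}. f t}" using Suc assms(1) by auto
  have b: "{t\<in>{1..s}. f t} = insert s {t\<in>{1..s'}. f t}" using Suc assms(2) by auto
  show ?thesis unfolding a b using Suc by simp
qed

lemma pf_basic:
  assumes P: "\<pi> \<in> parking_functions m n" and i: "i \<in> {1..m}"
  shows "1 \<le> \<pi> i" "\<pi> i \<le> n"
    "{s. \<pi> i \<le> s \<and> s \<le> n \<and> occ \<pi> n (i - 1) s = None} \<noteq> {}"
    "\<pi> i \<le> spot \<pi> n i" "spot \<pi> n i \<le> n" "occ \<pi> n (i - 1) (spot \<pi> n i) = None"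
    "\<And>s. \<pi> i \<le> s \<Longrightarrow> s < spot \<pi> n i \<Longrightarrow> occ \<pi> n (i - 1) s \<noteq> None"
proof -
  define S where "S = {s. \<pi> i \<le> s \<and> s \<le> n \<and> occ \<pi> n (i - 1) s = None}"
  have ne: "S \<noteq> {}" using P i by (auto simp: parking_functions_def S_def)
  have fin: "finite S" by (simp add: S_def)
  have sp: "spot \<pi> n i = Min S" by (simp add: spot_def S_def)
  have mS: "Min S \<in> S" using Min_in[OF fin ne] .
  show "1 \<le> \<pi> i" "\<pi> i \<le> n" using P i by (auto simp: parking_functions_def PiE_def Pi_def)
  show "{s. \<pi> i \<le> s \<and> s \<le> n \<and> occ \<pi> n (i - 1) s = None} \<noteq> {}" using ne by (simp add: S_def)
  show "\<pi> i \<le> spot \<pi> n i" "spot \<pi> n i \<le> n" "occ \<pi> n (i - 1) (spot \<pi> n i) = None"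
    using mS sp by (auto simp: S_def)
  show "\<And>s. \<pi> i \<le> s \<Longrightarrow> s < spot \<pi> n i \<Longrightarrow> occ \<pi> n (i - 1) s \<noteq> None"
  proof
    fix s assume s: "\<pi> i \<le> s" "s < spot \<pi> n i" "occ \<pi> n (i - 1) s = None"
    then have "s \<in> S" using mS sp by (auto simp: S_def)
    then show False using Min_le[OF fin, of s] sp s by simp
  qed
qed

lemma occ_pf:
  assumes P: "\<pi> \<in> parking_functions m n"
  shows "k \<le> m \<Longrightarrow> occ \<pi> n k s = Some c \<longleftrightarrow> (1 \<le> c \<and> c \<le> k \<and> spot \<pi> n c = s)"
proof (induction k arbitrary: s c)
  case 0 then show ?case by simp
next
  case (Suc k)
  let ?S = "{s. \<pi> (Suc k) \<le> s \<and> s \<le> n \<and> occ \<pi> n k s = None}"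
  have i: "Suc k \<in> {1..m}" using Suc.prems by simp
  have ne: "?S \<noteq> {}" using pf_basic(3)[OF P i] by simp
  have mn': "Min ?S = spot \<pi> n (Suc k)" by (simp add: spot_def)
  have "occ \<pi> n (Suc k) = (if ?S = {} then occ \<pi> n k
      else (occ \<pi> n k)(Min ?S := Some (Suc k)))" by (simp only: occ.simps Let_def)
  also have "\<dots> = (occ \<pi> n k)(spot \<pi> n (Suc k) := Some (Suc k))"
    by (simp only: ne mn' if_False)
  finally have eq: "occ \<pi> n (Suc k) = (occ \<pi> n k)(spot \<pi> n (Suc k) := Some (Suc k))" .
  have none: "occ \<pi> n k (spot \<pi> n (Suc k)) = None" using pf_basic(6)[OF P i] by simp
  have inj: "\<And>c. 1 \<le> c \<Longrightarrow> c \<le> k \<Longrightarrow> spot \<pi> n c \<noteq> spot \<pi> n (Suc k)"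
  proof
    fix c assume c: "1 \<le> c" "c \<le> k" "spot \<pi> n c = spot \<pi> n (Suc k)"
    then have "occ \<pi> n k (spot \<pi> n (Suc k)) = Some c" using Suc.IH Suc.prems by simp
    then show False using none by simp
  qed
  show ?case
  proof (cases "s = spot \<pi> n (Suc k)")
    case True
    then show ?thesis using eq inj by (auto simp: le_Suc_eq)
  next
    case False
    then show ?thesis using eq Suc.IH[of s c] Suc.prems by (auto simp: le_Suc_eq)
  qed
qed

lemma omega_iff:
  assumes P: "\<pi> \<in> parking_functions m n"
  shows "occ \<pi> n m s = Some c \<longleftrightarrow> (c \<in> {1..m} \<and> spot \<pi> n c = s)"
  using occ_pf[OF P, of m s c] by auto

lemma spot_inj:
  assumes P: "\<pi> \<in> parking_functions m n" and "i \<in> {1..m}" "j \<in> {1..m}" "spot \<pi> n i = spot \<pi> n j"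
  shows "i = j"
  using omega_iff[OF P, of "spot \<pi> n i" i] omega_iff[OF P, of "spot \<pi> n i" j] assms by simp

lemma Q2:
  assumes P: "\<pi> \<in> parking_functions m n" and i: "i \<in> {1..m}"
    and s: "\<pi> i \<le> s" "s < spot \<pi> n i"
  shows "\<exists>c. 1 \<le> c \<and> c < i \<and> spot \<pi> n c = s"
proof -
  obtain c where c: "occ \<pi> n (i - 1) s = Some c" using pf_basic(7)[OF P i s] by blast
  have im: "i - 1 \<le> m" using i by auto
  show ?thesis using occ_pf[OF P im] c i by fastforce
qed

lemma omega0:
  assumes P: "\<pi> \<in> parking_functions m n"
  shows "occ \<pi> n m 0 = None"
proof (rule ccontr)
  assume "occ \<pi> n m 0 \<noteq> None"
  then obtain c where "occ \<pi> n m 0 = Some c" by blast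
  then have c: "c \<in> {1..m}" "spot \<pi> n c = 0" using omega_iff[OF P] by auto
  then show False using pf_basic(1,4)[OF P c(1)] by simp
qed

lemma omega_gt:
  assumes P: "\<pi> \<in> parking_functions m n" and s: "n < s"
  shows "occ \<pi> n m s = None"
proof (rule ccontr)
  assume "occ \<pi> n m s \<noteq> None"
  then obtain c where "occ \<pi> n m s = Some c" by blast
  then have c: "c \<in> {1..m}" "spot \<pi> n c = s" using omega_iff[OF P] by auto
  then show False using pf_basic(5)[OF P c(1)] s by simp
qed

lemma card_empty_spots:
  assumes P: "\<pi> \<in> parking_functions m n" and mn: "m < n"
  shows "card {t\<in>{1..n}. occ \<pi> n m t = None} = n - m"
proof -
  have occset: "{t\<in>{1..n}. occ \<pi> n m t \<noteq> None} = spot \<pi> n ` {1..m}"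
  proof (intro set_eqI iffI)
    fix t assume "t \<in> {t\<in>{1..n}. occ \<pi> n m t \<noteq> None}"
    then obtain c where "occ \<pi> n m t = Some c" by auto
    then show "t \<in> spot \<pi> n ` {1..m}" using omega_iff[OF P] by auto
  next
    fix t assume "t \<in> spot \<pi> n ` {1..m}"
    then obtain c where c: "c \<in> {1..m}" "t = spot \<pi> n c" by auto
    then have "occ \<pi> n m t = Some c" using omega_iff[OF P] by auto
    moreover have "1 \<le> t" "t \<le> n" using pf_basic(1,4,5)[OF P c(1)] c by auto
    ultimately show "t \<in> {t\<in>{1..n}. occ \<pi> n m t \<noteq> None}" by auto
  qed
  have "inj_on (spot \<pi> n) {1..m}" using spot_inj[OF P] by (auto simp: inj_on_def)
  then have c1: "card {t\<in>{1..n}. occ \<pi> n m t \<noteq> None} = m" using occset card_image by fastforce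
  have "card ({t\<in>{1..n}. occ \<pi> n m t = None} \<union> {t\<in>{1..n}. occ \<pi> n m t \<noteq> None})
     = card {t\<in>{1..n}. occ \<pi> n m t = None} + card {t\<in>{1..n}. occ \<pi> n m t \<noteq> None}"
    by (rule card_Un_disjoint) auto
  moreover have "{t\<in>{1..n}. occ \<pi> n m t = None} \<union> {t\<in>{1..n}. occ \<pi> n m t \<noteq> None} = {1..n}" by auto
  ultimately have "card {t\<in>{1..n}. occ \<pi> n m t = None} + card {t\<in>{1..n}. occ \<pi> n m t \<noteq> None} = n" by simp
  then show ?thesis using c1 by simp
qed

lemma nodeof_Inl:
  "nodeof m n \<pi> s = Inl c \<longleftrightarrow> occ \<pi> n m s = Some c"
  by (auto simp: nodeof_def split: option.splits)

lemma nodeof_inj: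
  assumes P: "\<pi> \<in> parking_functions m n" and s: "s \<le> n" "s' \<le> n"
    and e: "nodeof m n \<pi> s = nodeof m n \<pi> s'"
  shows "s = s'"
proof (cases "occ \<pi> n m s")
  case (Some c)
  then have "nodeof m n \<pi> s' = Inl c" using e nodeof_Inl by metis
  then have "occ \<pi> n m s' = Some c" using nodeof_Inl by metis
  then show ?thesis using Some omega_iff[OF P] by auto
next
  case None
  have N': "occ \<pi> n m s' = None"
  proof (rule ccontr)
    assume "occ \<pi> n m s' \<noteq> None"
    then obtain c where "occ \<pi> n m s' = Some c" by blast
    then have "nodeof m n \<pi> s = Inl c" using e nodeof_Inl by metis
    then show False using None nodeof_Inl by simp
  qed
  have ce: "card {t\<in>{1..s}. occ \<pi> n m t = None} = card {t\<in>{1..s'}. occ \<pi> n m t = None}"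
    using e None N' by (simp add: nodeof_def)
  have lt: "a < b \<Longrightarrow> occ \<pi> n m b = None \<Longrightarrow>
      card {t\<in>{1..a}. occ \<pi> n m t = None} < card {t\<in>{1..b}. occ \<pi> n m t = None}" for a b
  proof -
    assume ab: "a < b" "occ \<pi> n m b = None"
    have sub: "{t\<in>{1..a}. occ \<pi> n m t = None} \<subseteq> {t\<in>{1..b}. occ \<pi> n m t = None}" using ab by auto
    have "b \<in> {t\<in>{1..b}. occ \<pi> n m t = None}" "b \<notin> {t\<in>{1..a}. occ \<pi> n m t = None}" using ab by auto
    then have ne: "{t\<in>{1..a}. occ \<pi> n m t = None} \<noteq> {t\<in>{1..b}. occ \<pi> n m t = None}" by blast
    show ?thesis by (rule psubset_card_mono[OF _ psubsetI[OF sub ne]]) simp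
  qed
  show ?thesis
  proof (rule ccontr)
    assume "s \<noteq> s'"
    then consider "s < s'" | "s' < s" by linarith
    then show False
    proof cases
      case 1
      then show False using lt[OF 1 N'] ce by simp
    next
      case 2
      then show False using lt[OF 2 None] ce by simp
    qed
  qed
qed

lemma nodeof_nodes:
  assumes P: "\<pi> \<in> parking_functions m n" and mn: "m < n" and s: "s \<le> n"
  shows "nodeof m n \<pi> s \<in> nodes m n"
proof (cases "occ \<pi> n m s")
  case (Some c)
  have "nodeof m n \<pi> s = Inl c" using Some by (simp add: nodeof_def)
  moreover have "c \<in> {1..m}" using omega_iff[OF P] Some by auto
  ultimately show ?thesis by (simp add: nodes_def)
next
  case None
  have "card {t\<in>{1..s}. occ \<pi> n m t = None} \<le> card {t\<in>{1..n}. occ \<pi> n m t = None}"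
    using s by (intro card_mono) auto
  then show ?thesis using None card_empty_spots[OF P mn] by (auto simp: nodeof_def nodes_def)
qed

lemma h_forest:
  assumes P: "\<pi> \<in> parking_functions m n" and mn: "m < n"
  shows "hmap m n \<pi> \<in> ordered_forests m n"
proof -
  let ?p = "hmap m n \<pi>"
  have pi: "\<And>i. i \<in> {1..m} \<Longrightarrow> ?p i = nodeof m n \<pi> (\<pi> i - 1)" by (simp add: hmap_def)
  have ran: "?p \<in> {1..m} \<rightarrow>\<^sub>E (Inl ` {1..m} \<union> Inr ` {0..n-m})"
  proof -
    have "\<And>i. i \<in> {1..m} \<Longrightarrow> nodeof m n \<pi> (\<pi> i - 1) \<in> nodes m n"
      using nodeof_nodes[OF P mn] pf_basic(2)[OF P] by (meson diff_le_self le_trans)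
    then show ?thesis unfolding hmap_def nodes_def by auto
  qed
  have acyc: "\<forall>i. i \<in> {1..m} \<longrightarrow> spot \<pi> n i = N \<longrightarrow> (\<exists>k. \<not> isl ((up ?p ^^ k) (Inl i)))" for N
  proof (induction N rule: less_induct)
    case (less N)
    show ?case
    proof (intro allI impI)
      fix i assume i: "i \<in> {1..m}" "spot \<pi> n i = N"
      have e: "\<And>k. (up ?p ^^ Suc k) (Inl i) = (up ?p ^^ k) (?p i)"
        by (metis comp_apply funpow_Suc_right up_Inl)
      show "\<exists>k. \<not> isl ((up ?p ^^ k) (Inl i))"
      proof (cases "?p i")
        case (Inl c)
        then have "occ \<pi> n m (\<pi> i - 1) = Some c" using pi[OF i(1)] nodeof_Inl by metis
        then have c: "c \<in> {1..m}" "spot \<pi> n c = \<pi> i - 1" using omega_iff[OF P] by auto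
        have "spot \<pi> n c < N" using c(2) i pf_basic(1,4)[OF P i(1)] by simp
        then obtain k where "\<not> isl ((up ?p ^^ k) (Inl c))" using less c(1) by blast
        then show ?thesis using e[of k] Inl by metis
      next
        case (Inr r)
        then show ?thesis using e[of 0] by (metis funpow_0 isl_def sum.disc(2))
      qed
    qed
  qed
  show ?thesis unfolding ordered_forests_def using ran acyc by blast
qed

lemma Lk_h:
  assumes P: "\<pi> \<in> parking_functions m n" and mn: "m < n"
  shows "s \<le> n \<Longrightarrow> Lk m (hmap m n \<pi>) s = map (nodeof m n \<pi>) [0..<Suc s]"
proof (induction s)
  case 0
  have "nodeof m n \<pi> 0 = Inr 0" using omega0[OF P] by (simp add: nodeof_def)
  then show ?case by (simp add: Lk_0)
next
  case (Suc s)
  let ?p = "hmap m n \<pi>"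
  let ?nd = "nodeof m n \<pi>"
  let ?vs = "map ?nd [0..<Suc s]"
  define U where "U = {i\<in>{1..m}. ?p i \<in> set ?vs \<and> Inl i \<notin> set ?vs}"
  have sv: "set ?vs = ?nd ` {0..s}" by (simp only: set_map set_upt atLeastLessThanSuc_atLeastAtMost)
  have Uiff: "i \<in> U \<longleftrightarrow> i \<in> {1..m} \<and> \<pi> i \<le> Suc s \<and> Suc s \<le> spot \<pi> n i" for i
  proof (cases "i \<in> {1..m}")
    case True
    have b: "1 \<le> \<pi> i" "\<pi> i \<le> n" "spot \<pi> n i \<le> n" using pf_basic(1,2,5)[OF P True] by auto
    have a1: "?p i \<in> ?nd ` {0..s} \<longleftrightarrow> \<pi> i - 1 \<le> s"
    proof
      assume "?p i \<in> ?nd ` {0..s}"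
      then obtain t where t: "t \<le> s" "?nd t = ?nd (\<pi> i - 1)" using True by (auto simp: hmap_def)
      then have "t = \<pi> i - 1" using nodeof_inj[OF P] Suc.prems b by (metis Suc_leD diff_le_self le_trans)
      then show "\<pi> i - 1 \<le> s" using t by simp
    next
      assume a: "\<pi> i - 1 \<le> s"
      have e: "?p i = ?nd (\<pi> i - 1)" using True by (simp add: hmap_def)
      have "\<pi> i - 1 \<in> {0..s}" using a by simp
      then show "?p i \<in> ?nd ` {0..s}" unfolding e by (rule imageI)
    qed
    have a2: "Inl i \<in> ?nd ` {0..s} \<longleftrightarrow> spot \<pi> n i \<le> s"
    proof
      assume "Inl i \<in> ?nd ` {0..s}"
      then obtain t where t: "t \<le> s" "?nd t = Inl i" by auto
      then have "occ \<pi> n m t = Some i" using nodeof_Inl by metis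
      then show "spot \<pi> n i \<le> s" using omega_iff[OF P] t by auto
    next
      assume "spot \<pi> n i \<le> s"
      moreover have "?nd (spot \<pi> n i) = Inl i" using omega_iff[OF P] True nodeof_Inl by metis
      ultimately show "Inl i \<in> ?nd ` {0..s}" by force
    qed
    show ?thesis unfolding U_def sv using a1 a2 b True by auto
  next
    case False
    then show ?thesis unfolding U_def by blast
  qed
  have finU: "finite U" by (simp add: U_def)
  have psn: "ps_next m ?p ?vs = (if U \<noteq> {} then Inl (Min U) else Inr (length (filter (\<lambda>x. \<not> isl x) ?vs)))"
    by (simp only: ps_next_def U_def Let_def)
  have nx: "ps_next m ?p ?vs = ?nd (Suc s)"
  proof (cases "occ \<pi> n m (Suc s)")
    case (Some c)
    then have c: "c \<in> {1..m}" "spot \<pi> n c = Suc s" using omega_iff[OF P] by auto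
    have cU: "c \<in> U" using Uiff c pf_basic(4)[OF P c(1)] by simp
    have "\<forall>i\<in>U. c \<le> i"
    proof (rule ccontr)
      assume "\<not> (\<forall>i\<in>U. c \<le> i)"
      then obtain i where i: "i \<in> U" "i < c" by auto
      have i1: "i \<in> {1..m}" "\<pi> i \<le> Suc s" "Suc s \<le> spot \<pi> n i" using Uiff i(1) by auto
      have "spot \<pi> n i \<noteq> Suc s" using spot_inj[OF P i1(1) c(1)] c(2) i(2) by auto
      then obtain c' where "1 \<le> c'" "c' < i" "spot \<pi> n c' = Suc s" using Q2[OF P i1(1), of "Suc s"] i1 by auto
      then have "c' = c" using spot_inj[OF P _ c(1)] c(2) i1(1) by auto
      then show False using \<open>c' < i\<close> i(2) by simp
    qed
    then have "Min U = c" using cU finU by (intro Min_eqI) auto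
    moreover have "U \<noteq> {}" using cU by blast
    ultimately show ?thesis using Some psn by (simp add: nodeof_def)
  next
    case None
    have Ue: "U = {}"
    proof (rule ccontr)
      assume "U \<noteq> {}"
      then obtain i where i: "i \<in> U" by blast
      have i1: "i \<in> {1..m}" "\<pi> i \<le> Suc s" "Suc s \<le> spot \<pi> n i" using Uiff i by auto
      have "spot \<pi> n i \<noteq> Suc s" using omega_iff[OF P] None i1(1) by (metis option.distinct(1))
      then obtain c' where "1 \<le> c'" "c' < i" "spot \<pi> n c' = Suc s" using Q2[OF P i1(1), of "Suc s"] i1 by auto
      then have "occ \<pi> n m (Suc s) = Some c'" using omega_iff[OF P] i1(1) by auto
      then show False using None by simp
    qed
    have "length (filter (\<lambda>x. \<not> isl x) ?vs) = card {t. t < length ?vs \<and> \<not> isl (?vs ! t)}"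
      by (rule length_filter_conv_card)
    also have "\<dots> = card {t. t < Suc s \<and> occ \<pi> n m t = None}"
    proof (intro arg_cong[where f=card] Collect_cong)
      fix t
      show "(t < length ?vs \<and> \<not> isl (?vs ! t)) = (t < Suc s \<and> occ \<pi> n m t = None)"
      proof (cases "t < Suc s")
        case True
        have "?vs ! t = ?nd t" using nth_map_upt[of t "Suc s" 0 ?nd] True by simp
        then show ?thesis using True by (cases "occ \<pi> n m t") (simp_all add: nodeof_def)
      qed simp
    qed
    also have "\<dots> = card {t\<in>{1..Suc s}. occ \<pi> n m t = None}"
      using card_shift[where f="\<lambda>t. occ \<pi> n m t = None" and s="Suc s"] omega0[OF P] None by simp
    finally have calc: "length (filter (\<lambda>x. \<not> isl x) ?vs) = card {t\<in>{1..Suc s}. occ \<pi> n m t = None}" .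
    have nd: "?nd (Suc s) = Inr (card {t\<in>{1..Suc s}. occ \<pi> n m t = None})" using None by (simp add: nodeof_def)
    have ps_eq: "ps_next m ?p ?vs = Inr (length (filter (\<lambda>x. \<not> isl x) ?vs))" using psn Ue by simp
    show ?thesis by (simp only: ps_eq calc nd)
  qed
  have IH: "Lk m ?p s = ?vs" using Suc by simp
  have "Lk m ?p (Suc s) = ?vs @ [ps_next m ?p ?vs]" using IH by (simp add: Lk_Suc del: upt_Suc)
  also have "\<dots> = map ?nd [0..<Suc (Suc s)]" using nx by simp
  finally show ?case .
qed

lemma order_h:
  assumes P: "\<pi> \<in> parking_functions m n" and mn: "m < n" and s: "s \<le> n"
  shows "ps_order m n (hmap m n \<pi>) ! s = nodeof m n \<pi> s"
proof -
  have "ps_order m n (hmap m n \<pi>) = map (nodeof m n \<pi>) [0..<Suc n]"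
    using Lk_h[OF P mn order.refl] by (simp only: ps_order_Lk)
  moreover have "map (nodeof m n \<pi>) [0..<Suc n] ! s = nodeof m n \<pi> (0 + s)"
    using s by (intro nth_map_upt) simp
  ultimately show ?thesis by simp
qed




lemma gh:
  assumes P: "\<pi> \<in> parking_functions m n" and mn: "m < n"
  shows "gmap m n (hmap m n \<pi>) = \<pi>"
proof
  fix i
  show "gmap m n (hmap m n \<pi>) i = \<pi> i"
  proof (cases "i \<in> {1..m}")
    case True
    have F: "hmap m n \<pi> \<in> ordered_forests m n" using h_forest[OF P mn] .
    have b: "1 \<le> \<pi> i" "\<pi> i \<le> n" using pf_basic(1,2)[OF P True] by auto
    have "hmap m n \<pi> i = nodeof m n \<pi> (\<pi> i - 1)" using True by (simp add: hmap_def)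
    also have "\<dots> = ps_order m n (hmap m n \<pi>) ! (\<pi> i - 1)" using order_h[OF P mn] b by simp
    finally have "visit_step m n (hmap m n \<pi>) (hmap m n \<pi> i) = \<pi> i - 1"
      using T_nth[OF F mn] b by simp
    then show ?thesis using True b by (simp add: gmap_def)
  next
    case False
    have "\<pi> \<in> extensional {1..m}" using P by (simp add: parking_functions_def PiE_def)
    then show ?thesis using False by (auto simp: gmap_def extensional_def)
  qed
qed

lemma om_g:
  assumes F: "p \<in> ordered_forests m n" and mn: "m < n" and s: "s \<le> n"
  shows "occ (gmap m n p) n m s = Some c \<longleftrightarrow> ps_order m n p ! s = Inl c"
proof -
  have "occ (gmap m n p) n m s = Some c \<longleftrightarrow> (1 \<le> c \<and> c \<le> m \<and> visit_step m n p (Inl c) = s)"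
    using occ_g[OF F mn] by simp
  also have "\<dots> \<longleftrightarrow> ps_order m n p ! s = Inl c"
  proof
    assume "1 \<le> c \<and> c \<le> m \<and> visit_step m n p (Inl c) = s"
    then show "ps_order m n p ! s = Inl c" using T_node(2)[OF F mn, of "Inl c"] Inl_node by auto
  next
    assume a: "ps_order m n p ! s = Inl c"
    have "ps_order m n p ! s \<in> nodes m n" using order_props(1,3)[OF F mn] s by (metis le_imp_less_Suc nth_mem)
    then have "c \<in> {1..m}" using a Inl_node by simp
    moreover have "visit_step m n p (Inl c) = s" using T_nth[OF F mn s] a by simp
    ultimately show "1 \<le> c \<and> c \<le> m \<and> visit_step m n p (Inl c) = s" by simp
  qed
  finally show ?thesis .
qed

lemma om_g_None:
  assumes F: "p \<in> ordered_forests m n" and mn: "m < n" and s: "s \<le> n"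
  shows "occ (gmap m n p) n m s = None \<longleftrightarrow> \<not> isl (ps_order m n p ! s)"
proof -
  have "(\<exists>c. occ (gmap m n p) n m s = Some c) \<longleftrightarrow> (\<exists>c. ps_order m n p ! s = Inl c)"
    using om_g[OF F mn s] by simp
  then show ?thesis by (metis isl_def not_None_eq)
qed

lemma node_g:
  assumes F: "p \<in> ordered_forests m n" and mn: "m < n" and s: "s \<le> n"
  shows "nodeof m n (gmap m n p) s = ps_order m n p ! s"
proof (cases "ps_order m n p ! s")
  case (Inl c)
  then have "occ (gmap m n p) n m s = Some c" using om_g[OF F mn s] by simp
  then show ?thesis using Inl by (simp add: nodeof_def)
next
  case (Inr r)
  have N: "occ (gmap m n p) n m s = None" using om_g_None[OF F mn s] Inr by simp
  have "r = card {t. t < s \<and> \<not> isl (ps_order m n p ! t)}" using F3[OF F mn s Inr] .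
  also have "\<dots> = card {t\<in>{1..s}. \<not> isl (ps_order m n p ! t)}"
    using card_shift[where f="\<lambda>t. \<not> isl (ps_order m n p ! t)" and s=s] order_props(4)[OF F mn] Inr by simp
  also have "\<dots> = card {t\<in>{1..s}. occ (gmap m n p) n m t = None}"
    using om_g_None[OF F mn] s by (intro arg_cong[where f=card]) auto
  finally show ?thesis using N Inr by (simp add: nodeof_def)
qed

lemma hg:
  assumes F: "p \<in> ordered_forests m n" and mn: "m < n"
  shows "hmap m n (gmap m n p) = p"
proof
  fix i
  show "hmap m n (gmap m n p) i = p i"
  proof (cases "i \<in> {1..m}")
    case True
    have le: "visit_step m n p (p i) \<le> n" using T_node(1)[OF F mn forest_nodes[OF F True]] .
    have "hmap m n (gmap m n p) i = nodeof m n (gmap m n p) (visit_step m n p (p i))"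
      using True by (simp add: hmap_def gmap_def)
    also have "\<dots> = p i" using node_g[OF F mn le] T_node(2)[OF F mn forest_nodes[OF F True]] by simp
    finally show ?thesis .
  next
    case False
    then show ?thesis using forest_ext[OF F] by (auto simp: hmap_def extensional_def)
  qed
qed

lemma anc_T:
  assumes F: "p \<in> ordered_forests m n" and mn: "m < n"
  shows "i \<in> {1..m} \<Longrightarrow> visit_step m n p ((up p ^^ d) (Inl i)) \<le> visit_step m n p (Inl i)"
proof (induction d arbitrary: i)
  case 0 then show ?case by simp
next
  case (Suc d)
  have e: "(up p ^^ Suc d) (Inl i) = (up p ^^ d) (p i)" by (metis comp_apply funpow_Suc_right up_Inl)
  have f4: "visit_step m n p (p i) < visit_step m n p (Inl i)" using F4[OF F mn Suc.prems] .
  show ?case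
  proof (cases "p i")
    case (Inl q)
    have "q \<in> {1..m}" using forest_nodes[OF F Suc.prems] Inl Inl_node by simp
    then show ?thesis using Suc.IH[of q] e Inl f4 by simp
  next
    case (Inr r)
    then show ?thesis using e f4 by simp
  qed
qed

lemma anc_NR:
  assumes F: "p \<in> ordered_forests m n" and mn: "m < n"
  shows "i \<in> {1..m} \<Longrightarrow> visit_step m n p ((up p ^^ d) (Inl i)) < u \<Longrightarrow> u \<le> visit_step m n p (Inl i)
     \<Longrightarrow> isl (ps_order m n p ! u)"
proof (induction d arbitrary: i)
  case 0 then show ?case by simp
next
  case (Suc d)
  have e: "(up p ^^ Suc d) (Inl i) = (up p ^^ d) (p i)" by (metis comp_apply funpow_Suc_right up_Inl)
  have top: "u = visit_step m n p (Inl i) \<Longrightarrow> isl (ps_order m n p ! u)"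
    using T_node(2)[OF F mn, of "Inl i"] Suc.prems(1) Inl_node by simp
  have mid: "visit_step m n p (p i) < u \<Longrightarrow> isl (ps_order m n p ! u)"
  proof -
    assume a: "visit_step m n p (p i) < u"
    show ?thesis
    proof (cases "u = visit_step m n p (Inl i)")
      case True then show ?thesis using top by simp
    next
      case False
      then have "u < visit_step m n p (Inl i)" using Suc.prems(3) by simp
      then show ?thesis using F5[OF F mn Suc.prems(1) a] by auto
    qed
  qed
  show ?case
  proof (cases "p i")
    case (Inl q)
    have q: "q \<in> {1..m}" using forest_nodes[OF F Suc.prems(1)] Inl Inl_node by simp
    show ?thesis
    proof (cases "u \<le> visit_step m n p (Inl q)")
      case True
      then show ?thesis using Suc.IH[OF q] Suc.prems(2) e Inl by simp
    next
      case False
      then show ?thesis using mid Inl by simp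
    qed
  next
    case (Inr r)
    then show ?thesis using mid Suc.prems(2) e by simp
  qed
qed

lemma fwd:
  assumes F: "p \<in> ordered_forests m n" and mn: "m < n"
  shows "\<forall>i. ps_order m n p ! k = Inl i \<longrightarrow> k \<le> n \<longrightarrow> j < k \<longrightarrow> (\<forall>u\<in>{j..k}. isl (ps_order m n p ! u))
      \<longrightarrow> ps_order m n p ! j = Inl z \<longrightarrow> (\<exists>d a. (up p ^^ d) (Inl i) = Inl a \<and> z \<le> a)"
proof (induction k rule: less_induct)
  case (less k)
  let ?o = "ps_order m n p"
  let ?T = "visit_step m n p"
  show ?case
  proof (intro allI impI)
    fix i assume ok: "?o ! k = Inl i" and kn: "k \<le> n" and jk: "j < k"
      and seg: "\<forall>u\<in>{j..k}. isl (?o ! u)" and oj: "?o ! j = Inl z"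
    have "?o ! k \<in> nodes m n" using order_props(1,3)[OF F mn] kn by (metis le_imp_less_Suc nth_mem)
    then have i: "i \<in> {1..m}" using ok Inl_node by simp
    have Ti: "?T (Inl i) = k" using T_nth[OF F mn kn] ok by simp
    show "\<exists>d a. (up p ^^ d) (Inl i) = Inl a \<and> z \<le> a"
    proof (cases "?T (p i) < j")
      case True
      then obtain j' where "?o ! j = Inl j'" "j' < i" using F5[OF F mn i True] jk Ti by auto
      then have "z < i" using oj by simp
      then show ?thesis by (intro exI[of _ 0] exI[of _ i]) simp
    next
      case False
      have f4: "?T (p i) < k" using F4[OF F mn i] Ti by simp
      have "isl (?o ! ?T (p i))" using seg False f4 by simp
      moreover have "?o ! ?T (p i) = p i" using T_node(2)[OF F mn forest_nodes[OF F i]] .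
      ultimately obtain q where q: "p i = Inl q" by (metis isl_def)
      have qm: "q \<in> {1..m}" using forest_nodes[OF F i] q Inl_node by simp
      have e: "\<And>d. (up p ^^ Suc d) (Inl i) = (up p ^^ d) (Inl q)"
        using q by (metis comp_apply funpow_Suc_right up_Inl)
      show ?thesis
      proof (cases "?T (Inl q) = j")
        case True
        then have "z = q" using oj T_node(2)[OF F mn, of "Inl q"] qm Inl_node by simp
        then show ?thesis using e[of 0] by (intro exI[of _ 1] exI[of _ q]) simp
      next
        case False
        have jq: "j < ?T (Inl q)" using False \<open>\<not> ?T (p i) < j\<close> q by simp
        have qk: "?T (Inl q) < k" using f4 q by simp
        have oq: "?o ! ?T (Inl q) = Inl q" using T_node(2)[OF F mn, of "Inl q"] qm Inl_node by simp
        have seg': "\<forall>u\<in>{j..?T (Inl q)}. isl (?o ! u)" using seg qk by auto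
        obtain d a where da: "(up p ^^ d) (Inl q) = Inl a" "z \<le> a"
          using less[OF qk] oq kn qk jq seg' oj by (meson less_imp_le_nat order.trans)
        have "(up p ^^ Suc d) (Inl i) = Inl a" using e[of d] da(1) by simp
        then show ?thesis using da(2) by blast
      qed
    qed
  qed
qed

lemma birds_nth:
  assumes k: "k < n"
  shows "birds_eye m n \<pi> ! k = occ \<pi> n m (Suc k)"
  using nth_map_upt[of k "Suc n" 1 "occ \<pi> n m"] k by (simp add: birds_eye_def)

lemma Rec_eq:
  assumes F: "p \<in> ordered_forests m n" and mn: "m < n"
  shows "forest_Rec m p = pf_Rec m n (gmap m n p)"
proof (intro set_eqI iffI)
  let ?o = "ps_order m n p"
  let ?T = "visit_step m n p"
  let ?w = "birds_eye m n (gmap m n p)"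
  have lw: "length ?w = n" by (simp add: birds_eye_def)
  have wS: "\<And>k c. k < n \<Longrightarrow> ?w ! k = Some c \<longleftrightarrow> ?o ! Suc k = Inl c"
    using om_g[OF F mn] birds_nth by simp
  have wN: "\<And>k. k < n \<Longrightarrow> ?w ! k \<noteq> None \<longleftrightarrow> isl (?o ! Suc k)"
    using om_g_None[OF F mn] birds_nth by simp
  fix c
  {
    assume cR: "c \<in> forest_Rec m p"
    then have c: "c \<in> {1..m}" and rec: "\<And>d a. (up p ^^ d) (Inl c) = Inl a \<Longrightarrow> a \<le> c"
      by (auto simp: forest_Rec_def)
    define K where "K = ?T (Inl c)"
    have K1: "1 \<le> K" "K \<le> n" using T_pos[OF F mn c] T_node(1)[OF F mn, of "Inl c"] c Inl_node
      by (auto simp: K_def)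
    have oK: "?o ! K = Inl c" using T_node(2)[OF F mn, of "Inl c"] c Inl_node by (simp add: K_def)
    have "K - 1 < n" "?w ! (K - 1) = Some c" using K1 oK wS[of "K - 1" c] by auto
    moreover have "\<forall>j<K - 1. (\<forall>t\<in>{j..K - 1}. ?w ! t \<noteq> None) \<longrightarrow> the (?w ! j) < c"
    proof (intro allI impI)
      fix j assume j: "j < K - 1" and segw: "\<forall>t\<in>{j..K - 1}. ?w ! t \<noteq> None"
      have seg: "\<forall>u\<in>{Suc j..K}. isl (?o ! u)"
      proof
        fix u assume u: "u \<in> {Suc j..K}"
        then have "u - 1 \<in> {j..K - 1}" by auto
        then have "?w ! (u - 1) \<noteq> None" using segw by blast
        then show "isl (?o ! u)" using wN[of "u - 1"] u K1 by auto
      qed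
      have "isl (?o ! Suc j)" using seg j by auto
      then obtain z where oz: "?o ! Suc j = Inl z" by (metis isl_def)
      have wj: "?w ! j = Some z" using wS[of j z] oz j K1 by simp
      obtain d a where "(up p ^^ d) (Inl c) = Inl a" "z \<le> a"
        using fwd[OF F mn, of K "Suc j" z] oK K1 j seg oz by auto
      then have "z \<le> c" using rec by force
      moreover have "z \<noteq> c" using oz oK T_nth[OF F mn, of K] T_nth[OF F mn, of "Suc j"] j K1 by force
      ultimately show "the (?w ! j) < c" using wj by simp
    qed
    ultimately show "c \<in> pf_Rec m n (gmap m n p)" unfolding pf_Rec_def word_Rec_def lw by blast
  }
  {
    assume "c \<in> pf_Rec m n (gmap m n p)"
    then obtain k where k: "k < n" "?w ! k = Some c"
      and cond: "\<forall>j<k. (\<forall>t\<in>{j..k}. ?w ! t \<noteq> None) \<longrightarrow> the (?w ! j) < c"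
      unfolding pf_Rec_def word_Rec_def lw by blast
    have ok: "?o ! Suc k = Inl c" using wS k by simp
    have "?o ! Suc k \<in> nodes m n" using order_props(1,3)[OF F mn] k by (metis Suc_mono nth_mem)
    then have c: "c \<in> {1..m}" using ok Inl_node by simp
    have Tc: "?T (Inl c) = Suc k" using T_nth[OF F mn, of "Suc k"] ok k by simp
    have "a \<le> c" if a: "(up p ^^ d) (Inl c) = Inl a" for d a
    proof (rule ccontr)
      assume "\<not> a \<le> c"
      then have ac: "c < a" by simp
      have am: "a \<in> {1..m}" using chain_nodes[OF F c, of d] a Inl_node by simp
      have "?T (Inl a) \<le> Suc k" using anc_T[OF F mn c, of d] a Tc by simp
      moreover have "?T (Inl a) \<noteq> Suc k" using T_inj[OF F mn, of "Inl a" "Inl c"] am c Inl_node Tc ac by auto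
      ultimately have Ta: "?T (Inl a) < Suc k" by simp
      have Ta1: "1 \<le> ?T (Inl a)" using T_pos[OF F mn am] .
      define j where "j = ?T (Inl a) - 1"
      have jk: "j < k" using Ta Ta1 by (simp add: j_def)
      have oa: "?o ! Suc j = Inl a" using T_node(2)[OF F mn, of "Inl a"] am Inl_node Ta1 by (simp add: j_def)
      have "\<forall>t\<in>{j..k}. ?w ! t \<noteq> None"
      proof
        fix t assume t: "t \<in> {j..k}"
        have "isl (?o ! Suc t)"
        proof (cases "t = j")
          case True then show ?thesis using oa by simp
        next
          case False
          then have "?T ((up p ^^ d) (Inl c)) < Suc t" "Suc t \<le> ?T (Inl c)"
            using t a Tc Ta1 by (auto simp: j_def)
          then show ?thesis using anc_NR[OF F mn c] by blast
        qed
        then show "?w ! t \<noteq> None" using wN[of t] t k by simp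
      qed
      then have "the (?w ! j) < c" using cond jk by blast
      moreover have "?w ! j = Some a" using wS[of j a] oa jk k by simp
      ultimately show False using ac by simp
    qed
    then show "c \<in> forest_Rec m p" using c by (auto simp: forest_Rec_def)
  }
qed




theorem theorem4p6:
  fixes m n a b :: nat and R :: "nat set"
  assumes "m < n"
  shows "card {p \<in> ordered_forests m n. forest_Rec m p = R \<and> psa m n p = a \<and> wait m n p = b}
       = card {\<pi> \<in> parking_functions m n. pf_Rec m n \<pi> = R \<and> lucky m n \<pi> = a \<and> probes m n \<pi> = b}"
proof -
  note mn = assms
  define A where "A = {p \<in> ordered_forests m n. forest_Rec m p = R \<and> psa m n p = a \<and> wait m n p = b}"
  define B where "B = {\<pi> \<in> parking_functions m n. pf_Rec m n \<pi> = R \<and> lucky m n \<pi> = a \<and> probes m n \<pi> = b}"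
  have st: "\<And>p. p \<in> ordered_forests m n \<Longrightarrow>
      pf_Rec m n (gmap m n p) = forest_Rec m p \<and> lucky m n (gmap m n p) = psa m n p
      \<and> probes m n (gmap m n p) = wait m n p"
    using Rec_eq[OF _ mn] g_lucky[OF _ mn] g_probes[OF _ mn] by simp
  have inj: "inj_on (gmap m n) A"
  proof (rule inj_onI)
    fix p q assume "p \<in> A" "q \<in> A" "gmap m n p = gmap m n q"
    then show "p = q" using hg[OF _ mn, of p] hg[OF _ mn, of q] by (metis (no_types, lifting) A_def mem_Collect_eq)
  qed
  have img: "gmap m n ` A = B"
  proof (intro set_eqI iffI)
    fix \<pi> assume "\<pi> \<in> gmap m n ` A"
    then obtain p where p: "p \<in> A" "\<pi> = gmap m n p" by blast
    then show "\<pi> \<in> B" using st g_pf[OF _ mn] by (auto simp: A_def B_def)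
  next
    fix \<pi> assume \<pi>: "\<pi> \<in> B"
    then have P: "\<pi> \<in> parking_functions m n" by (simp add: B_def)
    have F: "hmap m n \<pi> \<in> ordered_forests m n" using h_forest[OF P mn] .
    have e: "gmap m n (hmap m n \<pi>) = \<pi>" using gh[OF P mn] .
    have "hmap m n \<pi> \<in> A" using st[OF F] e \<pi> F by (auto simp: A_def B_def)
    then show "\<pi> \<in> gmap m n ` A" using e by force
  qed
  have "card B = card A" using card_image[OF inj] img by simp
  then show ?thesis by (simp add: A_def B_def)
qed


end
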